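(* Let $n\in\mathbb N$ and let $W,W',M,M'$ be pairwise disjoint sets, each of cardinality $n$. There exist functions $\succ_{W\cup W'}:\mathcal P(W,M)\to\mathcal F(W\cup W',M\cup M')$ and $\succ_{M\cup M'}:\mathcal P(M,W)\to\mathcal F(M\cup M',W\cup W')$ such that for every $\succ_W\in\mathcal P(W,M)$, $\succ_M\in\mathcal P(M,W)$ and every (possibly imperfect) marriage $\mu$ between $W$ and $M$, the following are equivalent: (1) $\mu$ is stable with respect to $\succ_W$ and $\succ_M$; (2) $\mu$ is a submarriage of some marriage between $W\cup W'$ and $M\cup M'$ that is stable with respect to $\succ_{W\cup W'}(\succ_W)$ and $\succ_{M\cup M'}(\succ_M)$.
   Context: $\mathcal P(A,B)$ is the set of profiles assigning to each $a\in A$ a preference list, i.e. a totally ordered subset of $B$ (members of $B$ not on the list are unacceptable); $\mathcal F(A,B)\subseteq\mathcal P(A,B)$ consists of profiles in which every list contains all of $B$. A participant prefers $x$ over $x'$ if $x$ precedes $x'$ on their list, or $x$ is on the list and $x'$ is not (being single counts as being matched to someone off the list). A marriage is a one-to-one map between a subset of the women and a subset of the men. It is stable if every married participant is married to someone on their list and there is no blocking pair $(w,m)$ where $w$ prefers $m$ to her current situation and $m$ prefers $w$ to his. A marriage $\mu$ between subsets of $W\subseteq \widetilde W$ and $M\subseteq\widetilde M$ is a submarriage of a marriage $\mu'$ between $\widetilde W$ and $\widetilde M$ if for all $w\in W$, $m\in M$: $\mu'(w)=m$ iff $\mu(w)=m$. *)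

theory Defs
  imports Main
begin

text \<open>Participants of all four groups live in one type 'a. A profile assigns to every
  participant a list; a preference list is a repetition-free list (totally ordered subset).\<close>

definition profiles :: "'a set \<Rightarrow> 'a set \<Rightarrow> ('a \<Rightarrow> 'a list) set" where
  "profiles A B = {p. \<forall>a. (a \<in> A \<longrightarrow> distinct (p a) \<and> set (p a) \<subseteq> B) \<and> (a \<notin> A \<longrightarrow> p a = [])}"

definition full_profiles :: "'a set \<Rightarrow> 'a set \<Rightarrow> ('a \<Rightarrow> 'a list) set" where
  "full_profiles A B = {p \<in> profiles A B. \<forall>a\<in>A. set (p a) = B}"

definition precedes :: "'a list \<Rightarrow> 'a \<Rightarrow> 'a \<Rightarrow> bool" where
  "precedes l x y \<longleftrightarrow> (\<exists>i j. i < j \<and> j < length l \<and> l ! i = x \<and> l ! j = y)"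

text \<open>a prefers x over its current situation s (None = single, counts as off-list)\<close>
definition prefers :: "('a \<Rightarrow> 'a list) \<Rightarrow> 'a \<Rightarrow> 'a \<Rightarrow> 'a option \<Rightarrow> bool" where
  "prefers p a x s \<longleftrightarrow> x \<in> set (p a) \<and>
     (case s of None \<Rightarrow> True | Some y \<Rightarrow> precedes (p a) x y \<or> y \<notin> set (p a))"

definition marriage :: "'a set \<Rightarrow> 'a set \<Rightarrow> ('a \<times> 'a) set \<Rightarrow> bool" where
  "marriage W M \<mu> \<longleftrightarrow> \<mu> \<subseteq> W \<times> M \<and>
     (\<forall>w m m'. (w, m) \<in> \<mu> \<longrightarrow> (w, m') \<in> \<mu> \<longrightarrow> m = m') \<and>
     (\<forall>w w' m. (w, m) \<in> \<mu> \<longrightarrow> (w', m) \<in> \<mu> \<longrightarrow> w = w')"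

definition husband :: "('a \<times> 'a) set \<Rightarrow> 'a \<Rightarrow> 'a option" where
  "husband \<mu> w = (if \<exists>m. (w, m) \<in> \<mu> then Some (THE m. (w, m) \<in> \<mu>) else None)"

definition wife :: "('a \<times> 'a) set \<Rightarrow> 'a \<Rightarrow> 'a option" where
  "wife \<mu> m = (if \<exists>w. (w, m) \<in> \<mu> then Some (THE w. (w, m) \<in> \<mu>) else None)"

definition stable ::
  "'a set \<Rightarrow> 'a set \<Rightarrow> ('a \<Rightarrow> 'a list) \<Rightarrow> ('a \<Rightarrow> 'a list) \<Rightarrow> ('a \<times> 'a) set \<Rightarrow> bool" where
  "stable W M pW pM \<mu> \<longleftrightarrow>
     (\<forall>(w, m) \<in> \<mu>. m \<in> set (pW w) \<and> w \<in> set (pM m)) \<and>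
     \<not> (\<exists>w\<in>W. \<exists>m\<in>M. prefers pW w m (husband \<mu> w) \<and> prefers pM m w (wife \<mu> m))"

definition submarriage :: "'a set \<Rightarrow> 'a set \<Rightarrow> ('a \<times> 'a) set \<Rightarrow> ('a \<times> 'a) set \<Rightarrow> bool" where
  "submarriage W M \<mu> \<mu>' \<longleftrightarrow> (\<forall>w\<in>W. \<forall>m\<in>M. (w, m) \<in> \<mu>' \<longleftrightarrow> (w, m) \<in> \<mu>)"

end

theory Submission
  imports Defs
begin


lemma prec_set: "precedes l x y \<Longrightarrow> x \<in> set l \<and> y \<in> set l"
  unfolding precedes_def by auto

lemma prec_app1: "distinct (l1 @ l2) \<Longrightarrow> precedes (l1 @ l2) x y \<Longrightarrow> y \<in> set l1 \<Longrightarrow> precedes l1 x y"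
  unfolding precedes_def
proof (elim exE conjE)
  fix i j assume d: "distinct (l1 @ l2)" and ij: "i < j" "j < length (l1 @ l2)" "(l1 @ l2) ! i = x" "(l1 @ l2) ! j = y"
    and y: "y \<in> set l1"
  obtain k where k: "k < length l1" "l1 ! k = y" using y by (auto simp: in_set_conv_nth)
  have "(l1 @ l2) ! k = y" using k by (simp add: nth_append)
  hence "k = j" using nth_eq_iff_index_eq[OF d, of k j] ij k by simp
  thus "\<exists>i j. i < j \<and> j < length l1 \<and> l1 ! i = x \<and> l1 ! j = y"
    using ij k by (intro exI[of _ i] exI[of _ j]) (auto simp: nth_append)
qed

lemma prec_app2: "precedes l1 x y \<Longrightarrow> precedes (l1 @ l2) x y"
  unfolding precedes_def
proof (elim exE conjE)
  fix i j assume "i < j" "j < length l1" "l1 ! i = x" "l1 ! j = y"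
  thus "\<exists>i j. i < j \<and> j < length (l1 @ l2) \<and> (l1 @ l2) ! i = x \<and> (l1 @ l2) ! j = y"
    by (intro exI[of _ i] exI[of _ j]) (auto simp: nth_append)
qed

lemma prec_app3: "x \<in> set l1 \<Longrightarrow> y \<in> set l2 \<Longrightarrow> precedes (l1 @ l2) x y"
  unfolding precedes_def
proof -
  assume "x \<in> set l1" "y \<in> set l2"
  then obtain i j where "i < length l1" "l1 ! i = x" "j < length l2" "l2 ! j = y" by (auto simp: in_set_conv_nth)
  thus "\<exists>i j. i < j \<and> j < length (l1 @ l2) \<and> (l1 @ l2) ! i = x \<and> (l1 @ l2) ! j = y"
    by (intro exI[of _ i] exI[of _ "length l1 + j"]) (auto simp: nth_append)
qed

lemma prec_asym: "distinct l \<Longrightarrow> precedes l x y \<Longrightarrow> \<not> precedes l y x"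
proof
  assume d: "distinct l" and p: "precedes l x y" and q: "precedes l y x"
  obtain i j where ij: "i < j" "j < length l" "l ! i = x" "l ! j = y" using p unfolding precedes_def by blast
  obtain i' j' where ij': "i' < j'" "j' < length l" "l ! i' = y" "l ! j' = x" using q unfolding precedes_def by blast
  have "i = j'" using nth_eq_iff_index_eq[OF d, of i j'] ij ij' by simp
  moreover have "j = i'" using nth_eq_iff_index_eq[OF d, of j i'] ij ij' by simp
  ultimately show False using ij ij' by simp
qed

lemma prec_irrefl: "distinct l \<Longrightarrow> \<not> precedes l x x"
  using prec_asym[of l x x] by blast

lemma prec_head: "x \<in> set l \<Longrightarrow> x \<noteq> z \<Longrightarrow> precedes (z # l) z x"
  using prec_app3[of z "[z]" x l] by simp

lemma prec_not_head: "distinct (z # l) \<Longrightarrow> \<not> precedes (z # l) x z"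
proof
  assume d: "distinct (z # l)" and p: "precedes (z # l) x z"
  obtain i j where ij: "i < j" "j < length (z # l)" "(z # l) ! i = x" "(z # l) ! j = z" using p unfolding precedes_def by blast
  have "j = 0" using nth_eq_iff_index_eq[OF d, of j 0] ij by simp
  thus False using ij by simp
qed

lemma prec_tl: "precedes (z # l) x y \<Longrightarrow> x \<noteq> z \<Longrightarrow> precedes l x y"
  unfolding precedes_def
proof (elim exE conjE)
  fix i j assume "i < j" "j < length (z # l)" "(z # l) ! i = x" "(z # l) ! j = y" "x \<noteq> z"
  thus "\<exists>i j. i < j \<and> j < length l \<and> l ! i = x \<and> l ! j = y"
    by (cases i; cases j) auto
qed

definition pos :: "'a list \<Rightarrow> 'a \<Rightarrow> nat" where
  "pos l x = (LEAST i. i < length l \<and> l ! i = x)"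

lemma pos_eq: "distinct l \<Longrightarrow> i < length l \<Longrightarrow> l ! i = x \<Longrightarrow> pos l x = i"
  unfolding pos_def by (rule Least_equality) (auto simp: nth_eq_iff_index_eq)

lemma prec_pos: "distinct l \<Longrightarrow> precedes l x y \<Longrightarrow> pos l x < pos l y"
  unfolding precedes_def using pos_eq by (metis order.strict_trans)

definition enum :: "'a set \<Rightarrow> 'a list" where
  "enum S = (SOME l. distinct l \<and> set l = S)"

lemma enum: "finite S \<Longrightarrow> distinct (enum S) \<and> set (enum S) = S"
  unfolding enum_def by (rule someI_ex) (metis finite_distinct_list)

definition ext :: "'a list \<Rightarrow> 'a set \<Rightarrow> 'a list" where
  "ext l S = l @ enum (S - set l)"

lemma ext: "finite S \<Longrightarrow> distinct l \<Longrightarrow> set l \<subseteq> S \<Longrightarrow> distinct (ext l S) \<and> set (ext l S) = S"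
  unfolding ext_def using enum[of "S - set l"] by auto

lemma husband_Some: "(\<forall>w m m'. (w, m) \<in> \<mu> \<longrightarrow> (w, m') \<in> \<mu> \<longrightarrow> m = m') \<Longrightarrow> (w, m) \<in> \<mu> \<Longrightarrow> husband \<mu> w = Some m"
  unfolding husband_def by (auto intro: the_equality)

lemma husband_None: "\<not> (\<exists>m. (w, m) \<in> \<mu>) \<Longrightarrow> husband \<mu> w = None"
  unfolding husband_def by auto

lemma wife_Some: "(\<forall>w w' m. (w, m) \<in> \<mu> \<longrightarrow> (w', m) \<in> \<mu> \<longrightarrow> w = w') \<Longrightarrow> (w, m) \<in> \<mu> \<Longrightarrow> wife \<mu> m = Some w"
  unfolding wife_def by (auto intro: the_equality)

lemma wife_None: "\<not> (\<exists>w. (w, m) \<in> \<mu>) \<Longrightarrow> wife \<mu> m = None"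
  unfolding wife_def by auto

lemma prefers_Some_full: "y \<in> set (p a) \<Longrightarrow> prefers p a x (Some y) \<longleftrightarrow> precedes (p a) x y"
  unfolding prefers_def using prec_set by fastforce


lemma leftover:
  fixes rA rB :: "'a \<Rightarrow> nat"
  shows "finite A \<Longrightarrow> finite B \<Longrightarrow> card A = card B \<Longrightarrow>
    \<exists>L. L \<subseteq> A \<times> B \<and> (\<forall>a\<in>A. \<exists>b. (a,b) \<in> L) \<and> (\<forall>b\<in>B. \<exists>a. (a,b) \<in> L) \<and>
      (\<forall>a b b'. (a,b) \<in> L \<longrightarrow> (a,b') \<in> L \<longrightarrow> b = b') \<and>
      (\<forall>a a' b. (a,b) \<in> L \<longrightarrow> (a',b) \<in> L \<longrightarrow> a = a') \<and>
      (\<forall>a b a1 b1. (a,b) \<in> L \<longrightarrow> (a1,b1) \<in> L \<longrightarrow> \<not> (rB b1 < rB b \<and> rA a < rA a1))"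
proof (induction "card A" arbitrary: A B)
  case 0
  then show ?case by (intro exI[of _ "{}"]) auto
next
  case (Suc k)
  hence ne: "A \<noteq> {}" "B \<noteq> {}" by auto
  have "Min (rA ` A) \<in> rA ` A" using Min_in[of "rA ` A"] ne Suc.prems by auto
  then obtain a where a0: "a \<in> A" "rA a = Min (rA ` A)" by auto
  have a: "a \<in> A" "\<forall>x\<in>A. rA a \<le> rA x" using a0 Suc.prems by auto
  have "Min (rB ` B) \<in> rB ` B" using Min_in[of "rB ` B"] ne Suc.prems by auto
  then obtain b where b0: "b \<in> B" "rB b = Min (rB ` B)" by auto
  have b: "b \<in> B" "\<forall>x\<in>B. rB b \<le> rB x" using b0 Suc.prems by auto
  have k1: "k = card (A - {a})" using Suc.hyps(2) a(1) Suc.prems(1) by simp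
  have k2: "card (A - {a}) = card (B - {b})" using Suc.prems a(1) b(1) by simp
  have fA: "finite (A - {a})" "finite (B - {b})" using Suc.prems by auto
  obtain L0 where L0: "L0 \<subseteq> (A - {a}) \<times> (B - {b})" "(\<forall>x\<in>A - {a}. \<exists>y. (x,y) \<in> L0)" "(\<forall>y\<in>B - {b}. \<exists>x. (x,y) \<in> L0)"
      "(\<forall>x y y'. (x,y) \<in> L0 \<longrightarrow> (x,y') \<in> L0 \<longrightarrow> y = y')"
      "(\<forall>x x' y. (x,y) \<in> L0 \<longrightarrow> (x',y) \<in> L0 \<longrightarrow> x = x')"
      "(\<forall>x y x1 y1. (x,y) \<in> L0 \<longrightarrow> (x1,y1) \<in> L0 \<longrightarrow> \<not> (rB y1 < rB y \<and> rA x < rA x1))"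
    using Suc.hyps(1)[OF k1 fA k2] by blast
  have blk: "\<not> (rB y1 < rB y \<and> rA x < rA x1)"
    if "(x,y) \<in> insert (a,b) L0" "(x1,y1) \<in> insert (a,b) L0" for x y x1 y1
  proof -
    have "y1 \<in> B" "x \<in> A" using that L0(1) a b by auto
    show ?thesis
    proof (cases "(x,y) = (a,b)")
      case True
      then show ?thesis using b(2) \<open>y1 \<in> B\<close> by auto
    next
      case False
      hence xy: "(x,y) \<in> L0" using that by auto
      show ?thesis
      proof (cases "(x1,y1) = (a,b)")
        case True
        then show ?thesis using a(2) \<open>x \<in> A\<close> by auto
      next
        case False
        hence "(x1,y1) \<in> L0" using that by auto
        then show ?thesis using L0(6) xy by blast
      qed
    qed
  qed
  have c1: "insert (a,b) L0 \<subseteq> A \<times> B" using L0(1) a b by auto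
  have c2: "\<forall>x\<in>A. \<exists>y. (x,y) \<in> insert (a,b) L0" using L0(2) by blast
  have c3: "\<forall>y\<in>B. \<exists>x. (x,y) \<in> insert (a,b) L0" using L0(3) by blast
  have c4: "\<forall>x y y'. (x,y) \<in> insert (a,b) L0 \<longrightarrow> (x,y') \<in> insert (a,b) L0 \<longrightarrow> y = y'"
    using L0(1,4) by blast
  have c5: "\<forall>x x' y. (x,y) \<in> insert (a,b) L0 \<longrightarrow> (x',y) \<in> insert (a,b) L0 \<longrightarrow> x = x'"
    using L0(1,5) by blast
  show ?case
    by (rule exI[of _ "insert (a,b) L0"]) (use c1 c2 c3 c4 c5 blk in blast)
qed



lemma ded_block: "distinct ((l @ [d]) @ r) \<Longrightarrow> set l \<subseteq> S \<Longrightarrow> y \<notin> S \<Longrightarrow> g \<in> set (l @ [d])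
  \<Longrightarrow> \<not> precedes ((l @ [d]) @ r) y g"
proof
  assume a: "distinct ((l @ [d]) @ r)" "set l \<subseteq> S" "y \<notin> S" "g \<in> set (l @ [d])" "precedes ((l @ [d]) @ r) y g"
  have d: "distinct (l @ [d])" using a(1) by simp
  have p: "precedes (l @ [d]) y g" using prec_app1[OF a(1) a(5) a(4)] .
  hence "y = d" using prec_set[OF p] a(2,3) by auto
  show False
  proof (cases "g = d")
    case True thus ?thesis using p \<open>y = d\<close> prec_irrefl[OF d] by simp
  next
    case False
    hence "g \<in> set l" using a(4) by simp
    hence "precedes (l @ [d]) g d" using prec_app3[of g l d "[d]"] by simp
    thus ?thesis using prec_asym[OF d] p \<open>y = d\<close> by blast
  qed
qed

lemma lift_small: "distinct ((l @ [d]) @ r) \<Longrightarrow> h \<in> set (l @ [d]) \<Longrightarrow> precedes ((l @ [d]) @ r) y h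
  \<Longrightarrow> y \<in> set l \<and> (h = d \<or> precedes l y h)"
proof -
  assume a: "distinct ((l @ [d]) @ r)" "h \<in> set (l @ [d])" "precedes ((l @ [d]) @ r) y h"
  have d: "distinct (l @ [d])" using a(1) by simp
  have p: "precedes (l @ [d]) y h" using prec_app1[OF a(1) a(3) a(2)] .
  show ?thesis
  proof (cases "h = d")
    case True
    then show ?thesis using prec_set[OF p] prec_irrefl[OF d] p by auto
  next
    case False
    hence "h \<in> set l" using a(2) by simp
    hence "precedes l y h" using prec_app1[OF d p] by simp
    then show ?thesis using prec_set by meson
  qed
qed

lemma lower_big: "y \<in> set l \<Longrightarrow> (precedes l y h \<or> h \<notin> set l) \<Longrightarrow> h \<in> set ((l @ [d]) @ r)
  \<Longrightarrow> precedes ((l @ [d]) @ r) y h"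
proof -
  assume a: "y \<in> set l" "precedes l y h \<or> h \<notin> set l" "h \<in> set ((l @ [d]) @ r)"
  show ?thesis
  proof (cases "precedes l y h")
    case True thus ?thesis using prec_app2[of l y h "[d] @ r"] by simp
  next
    case False
    hence "h \<in> set ([d] @ r)" using a by auto
    thus ?thesis using prec_app3[OF a(1), of h "[d] @ r"] by simp
  qed
qed

lemma ded_pref: "m \<notin> set (l @ [d]) \<Longrightarrow> m \<in> set ((l @ [d]) @ r) \<Longrightarrow> precedes ((l @ [d]) @ r) d m"
  by (rule prec_app3) auto



theorem lemma20:
  fixes n :: nat and W W' M M' :: "'a set"
  assumes "finite W" "finite W'" "finite M" "finite M'"
    and "card W = n" "card W' = n" "card M = n" "card M' = n"
    and "W \<inter> W' = {}" "W \<inter> M = {}" "W \<inter> M' = {}"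
    and "W' \<inter> M = {}" "W' \<inter> M' = {}" "M \<inter> M' = {}"
  shows "\<exists>fW fM.
     (\<forall>pW \<in> profiles W M. fW pW \<in> full_profiles (W \<union> W') (M \<union> M')) \<and>
     (\<forall>pM \<in> profiles M W. fM pM \<in> full_profiles (M \<union> M') (W \<union> W')) \<and>
     (\<forall>pW \<in> profiles W M. \<forall>pM \<in> profiles M W. \<forall>\<mu>. marriage W M \<mu> \<longrightarrow>
        (stable W M pW pM \<mu> \<longleftrightarrow>
         (\<exists>\<mu>'. marriage (W \<union> W') (M \<union> M') \<mu>' \<and>
               stable (W \<union> W') (M \<union> M') (fW pW) (fM pM) \<mu>' \<and>
               submarriage W M \<mu> \<mu>')))"
proof -
  note fin = assms(1-4)
  obtain \<sigma> where \<sigma>: "bij_betw \<sigma> W M'" using finite_same_card_bij[of W M'] assms by auto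
  obtain \<tau> where \<tau>: "bij_betw \<tau> M W'" using finite_same_card_bij[of M W'] assms by auto
  have \<sigma>i: "inj_on \<sigma> W" "\<sigma> ` W = M'" using \<sigma> by (auto simp: bij_betw_def)
  have \<tau>i: "inj_on \<tau> M" "\<tau> ` M = W'" using \<tau> by (auto simp: bij_betw_def)
  have \<sigma>inv: "inv_into W \<sigma> (\<sigma> w) = w" if "w \<in> W" for w using \<sigma>i that by simp
  have \<tau>inv: "inv_into M \<tau> (\<tau> m) = m" if "m \<in> M" for m using \<tau>i that by simp
  have \<sigma>inv2: "inv_into W \<sigma> y \<in> W \<and> \<sigma> (inv_into W \<sigma> y) = y" if "y \<in> M'" for y
    using \<sigma>i that by (metis f_inv_into_f inv_into_into)
  have \<tau>inv2: "inv_into M \<tau> x \<in> M \<and> \<tau> (inv_into M \<tau> x) = x" if "x \<in> W'" for x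
    using \<tau>i that by (metis f_inv_into_f inv_into_into)
  define eM where "eM = enum M'"
  define eW where "eW = enum W'"
  have eM: "distinct eM" "set eM = M'" using enum[OF fin(4)] eM_def by auto
  have eW: "distinct eW" "set eW = W'" using enum[OF fin(2)] eW_def by auto
  define fW where "fW = (\<lambda>(pW::'a \<Rightarrow> 'a list) x. if x \<in> W then ext (pW x @ [\<sigma> x]) (M \<union> M')
     else if x \<in> W' then ext (inv_into M \<tau> x # eM) (M \<union> M') else [])"
  define fM where "fM = (\<lambda>(pM::'a \<Rightarrow> 'a list) y. if y \<in> M then ext (pM y @ [\<tau> y]) (W \<union> W')
     else if y \<in> M' then ext (inv_into W \<sigma> y # eW) (W \<union> W') else [])"
  have finMM: "finite (M \<union> M')" and finWW: "finite (W \<union> W')" using fin by auto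
  have fW_W: "fW pW x = (pW x @ [\<sigma> x]) @ enum ((M \<union> M') - set (pW x @ [\<sigma> x])) \<and>
      distinct (fW pW x) \<and> set (fW pW x) = M \<union> M' \<and> set (pW x) \<subseteq> M \<and> distinct (pW x @ [\<sigma> x])"
    if "pW \<in> profiles W M" "x \<in> W" for pW x
  proof -
    have p: "distinct (pW x)" "set (pW x) \<subseteq> M" using that unfolding profiles_def by auto
    have s: "\<sigma> x \<in> M'" using \<sigma>i that by auto
    have d: "distinct (pW x @ [\<sigma> x])" using p s assms(14) by auto
    have "set (pW x @ [\<sigma> x]) \<subseteq> M \<union> M'" using p s by auto
    thus ?thesis using ext[OF finMM d] that p d unfolding fW_def ext_def by auto
  qed
  have fW_W': "fW pW x = (inv_into M \<tau> x # eM) @ enum ((M \<union> M') - set (inv_into M \<tau> x # eM)) \<and>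
      distinct (fW pW x) \<and> set (fW pW x) = M \<union> M'"
    if "x \<in> W'" for pW x
  proof -
    have s: "inv_into M \<tau> x \<in> M" using \<tau>inv2 that by auto
    have d: "distinct (inv_into M \<tau> x # eM)" using s eM assms(14) by auto
    have "set (inv_into M \<tau> x # eM) \<subseteq> M \<union> M'" using s eM by auto
    thus ?thesis using ext[OF finMM d] that assms(9) unfolding fW_def ext_def by auto
  qed
  have fM_M: "fM pM y = (pM y @ [\<tau> y]) @ enum ((W \<union> W') - set (pM y @ [\<tau> y])) \<and>
      distinct (fM pM y) \<and> set (fM pM y) = W \<union> W' \<and> set (pM y) \<subseteq> W \<and> distinct (pM y @ [\<tau> y])"
    if "pM \<in> profiles M W" "y \<in> M" for pM y
  proof -
    have p: "distinct (pM y)" "set (pM y) \<subseteq> W" using that unfolding profiles_def by auto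
    have s: "\<tau> y \<in> W'" using \<tau>i that by auto
    have d: "distinct (pM y @ [\<tau> y])" using p s assms(9) by auto
    have "set (pM y @ [\<tau> y]) \<subseteq> W \<union> W'" using p s by auto
    thus ?thesis using ext[OF finWW d] that p d unfolding fM_def ext_def by auto
  qed
  have fM_M': "fM pM y = (inv_into W \<sigma> y # eW) @ enum ((W \<union> W') - set (inv_into W \<sigma> y # eW)) \<and>
      distinct (fM pM y) \<and> set (fM pM y) = W \<union> W'"
    if "y \<in> M'" for pM y
  proof -
    have s: "inv_into W \<sigma> y \<in> W" using \<sigma>inv2 that by auto
    have d: "distinct (inv_into W \<sigma> y # eW)" using s eW assms(9) by auto
    have "set (inv_into W \<sigma> y # eW) \<subseteq> W \<union> W'" using s eW by auto
    thus ?thesis using ext[OF finWW d] that assms(14) unfolding fM_def ext_def by auto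
  qed
  have full1: "fW pW \<in> full_profiles (W \<union> W') (M \<union> M')" if "pW \<in> profiles W M" for pW
  proof -
    have "distinct (fW pW a) \<and> set (fW pW a) = M \<union> M'" if "a \<in> W \<union> W'" for a
      using fW_W[OF \<open>pW \<in> profiles W M\<close>, of a] fW_W'[of a pW] that by blast
    moreover have "fW pW a = []" if "a \<notin> W \<union> W'" for a using that by (simp add: fW_def)
    ultimately show ?thesis unfolding full_profiles_def profiles_def by auto
  qed
  have full2: "fM pM \<in> full_profiles (M \<union> M') (W \<union> W')" if "pM \<in> profiles M W" for pM
  proof -
    have "distinct (fM pM a) \<and> set (fM pM a) = W \<union> W'" if "a \<in> M \<union> M'" for a
      using fM_M[OF \<open>pM \<in> profiles M W\<close>, of a] fM_M'[of a pM] that by blast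
    moreover have "fM pM a = []" if "a \<notin> M \<union> M'" for a using that by (simp add: fM_def)
    ultimately show ?thesis unfolding full_profiles_def profiles_def by auto
  qed
  have main: "stable W M pW pM \<mu> \<longleftrightarrow>
         (\<exists>\<mu>'. marriage (W \<union> W') (M \<union> M') \<mu>' \<and>
               stable (W \<union> W') (M \<union> M') (fW pW) (fM pM) \<mu>' \<and>
               submarriage W M \<mu> \<mu>')"
    if pW: "pW \<in> profiles W M" and pM: "pM \<in> profiles M W" and mar: "marriage W M \<mu>" for pW pM \<mu>
  proof -
    from mar have sub: "\<mu> \<subseteq> W \<times> M"
      and f1: "\<forall>w m m'. (w,m)\<in>\<mu> \<longrightarrow> (w,m')\<in>\<mu> \<longrightarrow> m = m'"
      and f2: "\<forall>w w' m. (w,m)\<in>\<mu> \<longrightarrow> (w',m)\<in>\<mu> \<longrightarrow> w = w'"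
      unfolding marriage_def by auto
    have dj: "x \<notin> W'" if "x \<in> W" for x using that assms(9) by auto
    have dj2: "x \<notin> M" if "x \<in> W" for x using that assms(10) by auto
    have dj3: "x \<notin> M'" if "x \<in> W" for x using that assms(11) by auto
    have dj4: "x \<notin> M" if "x \<in> W'" for x using that assms(12) by auto
    have dj5: "x \<notin> M'" if "x \<in> W'" for x using that assms(13) by auto
    have dj6: "x \<notin> M'" if "x \<in> M" for x using that assms(14) by auto
    show ?thesis
    proof
      assume st: "stable W M pW pM \<mu>"
      have acc: "m \<in> set (pW w) \<and> w \<in> set (pM m)" if "(w,m)\<in>\<mu>" for w m
        using st that unfolding stable_def by auto
      have nobl: "\<not> (prefers pW w m (husband \<mu> w) \<and> prefers pM m w (wife \<mu> m))"
        if "w\<in>W" "m\<in>M" for w m using st that unfolding stable_def by auto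
      define SW where "SW = {w\<in>W. \<forall>m. (w,m)\<notin>\<mu>}"
      define SM where "SM = {m\<in>M. \<forall>w. (w,m)\<notin>\<mu>}"
      define A where "A = \<tau> ` (M - SM)"
      define B where "B = \<sigma> ` (W - SW)"
      have fin\<mu>: "finite \<mu>" using sub fin by (meson finite_SigmaI finite_subset)
      have e1: "W - SW = fst ` \<mu>" using sub unfolding SW_def by force
      have e2: "M - SM = snd ` \<mu>" using sub unfolding SM_def by force
      have i1: "inj_on fst \<mu>" using f1 unfolding inj_on_def by auto
      have i2: "inj_on snd \<mu>" using f2 unfolding inj_on_def by auto
      have cA: "card A = card \<mu>" unfolding A_def
        using card_image[OF inj_on_subset[OF \<tau>i(1), of "M - SM"]] card_image[OF i2] e2 by auto
      have cB: "card B = card \<mu>" unfolding B_def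
        using card_image[OF inj_on_subset[OF \<sigma>i(1), of "W - SW"]] card_image[OF i1] e1 by auto
      have finA: "finite A" "finite B" unfolding A_def B_def using fin by auto
      obtain L where L: "L \<subseteq> A \<times> B" "(\<forall>a\<in>A. \<exists>b. (a,b) \<in> L)" "(\<forall>b\<in>B. \<exists>a. (a,b) \<in> L)"
          "(\<forall>a b b'. (a,b) \<in> L \<longrightarrow> (a,b') \<in> L \<longrightarrow> b = b')"
          "(\<forall>a a' b. (a,b) \<in> L \<longrightarrow> (a',b) \<in> L \<longrightarrow> a = a')"
          "(\<forall>a b a1 b1. (a,b) \<in> L \<longrightarrow> (a1,b1) \<in> L \<longrightarrow> \<not> (pos eM b1 < pos eM b \<and> pos eW a < pos eW a1))"
        using leftover[where rA="pos eW" and rB="pos eM", OF finA cA[folded cB]] by blast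
      have AW': "A \<subseteq> W'" "B \<subseteq> M'" unfolding A_def B_def using \<sigma>i \<tau>i by auto
      have SWW: "SW \<subseteq> W" "SM \<subseteq> M" unfolding SW_def SM_def by auto
      define \<mu>' where "\<mu>' = \<mu> \<union> (\<lambda>w. (w, \<sigma> w)) ` SW \<union> (\<lambda>m. (\<tau> m, m)) ` SM \<union> L"
      have sub': "\<mu>' \<subseteq> (W \<union> W') \<times> (M \<union> M')"
        unfolding \<mu>'_def using sub L(1) AW' SWW \<sigma>i \<tau>i by blast
      have cW: "(x,y)\<in>\<mu> \<or> (x\<in>SW \<and> y = \<sigma> x)" if "(x,y)\<in>\<mu>'" "x\<in>W" for x y
        using that AW' SWW \<tau>i L(1) dj unfolding \<mu>'_def by blast
      have cW': "(y\<in>SM \<and> x = \<tau> y) \<or> (x,y)\<in>L" if "(x,y)\<in>\<mu>'" "x\<in>W'" for x y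
        using that sub SWW dj unfolding \<mu>'_def by blast
      have cM: "(x,y)\<in>\<mu> \<or> (y\<in>SM \<and> x = \<tau> y)" if "(x,y)\<in>\<mu>'" "y\<in>M" for x y
        using that AW' SWW \<sigma>i L(1) dj6 unfolding \<mu>'_def by blast
      have cM': "(x\<in>SW \<and> y = \<sigma> x) \<or> (x,y)\<in>L" if "(x,y)\<in>\<mu>'" "y\<in>M'" for x y
        using that sub SWW dj6 unfolding \<mu>'_def by blast
      have g1: "y = y'" if "(x,y)\<in>\<mu>'" "(x,y')\<in>\<mu>'" for x y y'
      proof -
        have "x \<in> W \<union> W'" using sub' that by auto
        thus ?thesis
        proof
          assume x: "x \<in> W"
          show ?thesis using cW[OF that(1) x] cW[OF that(2) x] f1 unfolding SW_def by blast
        next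
          assume x: "x \<in> W'"
          show ?thesis
          proof (cases "(x,y) \<in> L \<and> (x,y') \<in> L")
            case True thus ?thesis using L(4) by blast
          next
            case False
            have nA: False if "y1 \<in> SM" "x = \<tau> y1" "(x,y2) \<in> L" for y1 y2
            proof -
              have "x \<in> A" using that L(1) by auto
              then obtain m1 where "m1 \<in> M - SM" "x = \<tau> m1" unfolding A_def by auto
              thus False using that \<tau>i(1) SWW unfolding inj_on_def by auto
            qed
            have ij: "y1 = y2" if "y1 \<in> SM" "y2 \<in> SM" "\<tau> y1 = \<tau> y2" for y1 y2
              using that \<tau>i(1) SWW unfolding inj_on_def by blast
            show ?thesis using cW'[OF that(1) x] cW'[OF that(2) x] False nA ij by metis
          qed
        qed
      qed
      have g2: "x = x'" if "(x,y)\<in>\<mu>'" "(x',y)\<in>\<mu>'" for x x' y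
      proof -
        have "y \<in> M \<union> M'" using sub' that by auto
        thus ?thesis
        proof
          assume y: "y \<in> M"
          show ?thesis using cM[OF that(1) y] cM[OF that(2) y] f2 unfolding SM_def by blast
        next
          assume y: "y \<in> M'"
          show ?thesis
          proof (cases "(x,y) \<in> L \<and> (x',y) \<in> L")
            case True thus ?thesis using L(5) by blast
          next
            case False
            have nB: False if "x1 \<in> SW" "y = \<sigma> x1" "(x2,y) \<in> L" for x1 x2
            proof -
              have "y \<in> B" using that L(1) by auto
              then obtain w1 where "w1 \<in> W - SW" "y = \<sigma> w1" unfolding B_def by auto
              thus False using that \<sigma>i(1) SWW unfolding inj_on_def by auto
            qed
            have ij: "x1 = x2" if "x1 \<in> SW" "x2 \<in> SW" "\<sigma> x1 = \<sigma> x2" for x1 x2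
              using that \<sigma>i(1) SWW unfolding inj_on_def by blast
            show ?thesis using cM'[OF that(1) y] cM'[OF that(2) y] False nB ij by metis
          qed
        qed
      qed
      have hb: "husband \<mu>' x = Some y" if "(x,y)\<in>\<mu>'" for x y
        using husband_Some[of \<mu>' x y] g1 that by blast
      have wb: "wife \<mu>' y = Some x" if "(x,y)\<in>\<mu>'" for x y
        using wife_Some[of \<mu>' x y] g2 that by blast
      have perW: "\<exists>y. (x,y)\<in>\<mu>'" if "x \<in> W \<union> W'" for x
      proof (cases "x \<in> W")
        case True
        show ?thesis
        proof (cases "x \<in> SW")
          case True thus ?thesis unfolding \<mu>'_def by blast
        next
          case False thus ?thesis using \<open>x \<in> W\<close> unfolding \<mu>'_def SW_def by blast
        qed
      next
        case False
        hence x: "x \<in> W'" using that by auto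
        define m0 where "m0 = inv_into M \<tau> x"
        have m0: "m0 \<in> M" "\<tau> m0 = x" using \<tau>inv2[OF x] m0_def by auto
        show ?thesis
        proof (cases "m0 \<in> SM")
          case True thus ?thesis using m0 unfolding \<mu>'_def by blast
        next
          case False
          hence "x \<in> A" using m0 unfolding A_def by auto
          thus ?thesis using L(2) unfolding \<mu>'_def by blast
        qed
      qed
      have perM: "\<exists>x. (x,y)\<in>\<mu>'" if "y \<in> M \<union> M'" for y
      proof (cases "y \<in> M")
        case True
        show ?thesis
        proof (cases "y \<in> SM")
          case True thus ?thesis unfolding \<mu>'_def by blast
        next
          case False thus ?thesis using \<open>y \<in> M\<close> unfolding \<mu>'_def SM_def by blast
        qed
      next
        case False
        hence y: "y \<in> M'" using that by auto
        define w0 where "w0 = inv_into W \<sigma> y"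
        have w0: "w0 \<in> W" "\<sigma> w0 = y" using \<sigma>inv2[OF y] w0_def by auto
        show ?thesis
        proof (cases "w0 \<in> SW")
          case True thus ?thesis using w0 unfolding \<mu>'_def by blast
        next
          case False
          hence "y \<in> B" using w0 unfolding B_def by auto
          thus ?thesis using L(3) unfolding \<mu>'_def by blast
        qed
      qed
      have setW: "set (fW pW x) = M \<union> M'" if "x \<in> W \<union> W'" for x
        using fW_W[OF pW, of x] fW_W'[of x pW] that by blast
      have setM: "set (fM pM y) = W \<union> W'" if "y \<in> M \<union> M'" for y
        using fM_M[OF pM, of y] fM_M'[of y pM] that by blast
      have noblock: False if x: "x \<in> W \<union> W'" and y: "y \<in> M \<union> M'"
        and p1: "prefers (fW pW) x y (husband \<mu>' x)" and p2: "prefers (fM pM) y x (wife \<mu>' y)" for x y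
      proof -
        obtain h where h: "(x,h)\<in>\<mu>'" using perW[OF x] by blast
        obtain g where g: "(g,y)\<in>\<mu>'" using perM[OF y] by blast
        have hM: "h \<in> M \<union> M'" and gW: "g \<in> W \<union> W'" using h g sub' by auto
        have q1: "precedes (fW pW x) y h"
          using p1 hb[OF h] prefers_Some_full[of h "fW pW" x y] setW[OF x] hM by auto
        have q2: "precedes (fM pM y) x g"
          using p2 wb[OF g] prefers_Some_full[of g "fM pM" y x] setM[OF y] gW by auto
        show False
        proof (cases "x \<in> W")
          case xW: True
          have hs: "h \<in> set (pW x @ [\<sigma> x])" using cW[OF h xW] acc by auto
          note FW = fW_W[OF pW xW]
          show ?thesis
          proof (cases "y \<in> M")
            case yM: True
            have gs: "g \<in> set (pM y @ [\<tau> y])" using cM[OF g yM] acc by auto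
            note FM = fM_M[OF pM yM]
            have l1: "y \<in> set (pW x) \<and> (h = \<sigma> x \<or> precedes (pW x) y h)"
              using lift_small[of "pW x" "\<sigma> x" _ h y] FW hs q1 by metis
            have l2: "x \<in> set (pM y) \<and> (g = \<tau> y \<or> precedes (pM y) x g)"
              using lift_small[of "pM y" "\<tau> y" _ g x] FM gs q2 by metis
            have r1: "prefers pW x y (husband \<mu> x)"
            proof (cases "(x,h) \<in> \<mu>")
              case True
              hence "h \<noteq> \<sigma> x" using sub dj6 \<sigma>i xW by auto
              thus ?thesis using husband_Some[OF f1 True] l1 unfolding prefers_def by auto
            next
              case False
              hence "x \<in> SW" using cW[OF h xW] by auto
              hence "husband \<mu> x = None" using husband_None unfolding SW_def by auto
              thus ?thesis using l1 unfolding prefers_def by auto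
            qed
            have r2: "prefers pM y x (wife \<mu> y)"
            proof (cases "(g,y) \<in> \<mu>")
              case True
              hence "g \<noteq> \<tau> y" using sub dj \<tau>i yM by auto
              thus ?thesis using wife_Some[OF f2 True] l2 unfolding prefers_def by auto
            next
              case False
              hence "y \<in> SM" using cM[OF g yM] by auto
              hence "wife \<mu> y = None" using wife_None unfolding SM_def by auto
              thus ?thesis using l2 unfolding prefers_def by auto
            qed
            show False using nobl[OF xW yM] r1 r2 by blast
          next
            case False
            hence "y \<notin> M" by auto
            thus False using ded_block[of "pW x" "\<sigma> x" _ M y h] FW hs q1 by metis
          qed
        next
          case False
          hence xW': "x \<in> W'" using x by auto
          show ?thesis
          proof (cases "y \<in> M")
            case yM: True
            have gs: "g \<in> set (pM y @ [\<tau> y])" using cM[OF g yM] acc by auto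
            note FM = fM_M[OF pM yM]
            have "x \<notin> W" using xW' dj by auto
            thus False using ded_block[of "pM y" "\<tau> y" _ W x g] FM gs q2 by metis
          next
            case False
            hence yM': "y \<in> M'" using y by auto
            define m0 where "m0 = inv_into M \<tau> x"
            have m0: "m0 \<in> M" "\<tau> m0 = x" using \<tau>inv2[OF xW'] m0_def by auto
            define w0 where "w0 = inv_into W \<sigma> y"
            have w0: "w0 \<in> W" "\<sigma> w0 = y" using \<sigma>inv2[OF yM'] w0_def by auto
            obtain rW where FW: "fW pW x = (m0 # eM) @ rW" "distinct (fW pW x)"
              using fW_W'[OF xW', of pW] m0_def by blast
            obtain rM where FM: "fM pM y = (w0 # eW) @ rM" "distinct (fM pM y)"
              using fM_M'[OF yM', of pM] w0_def by blast
            have hL: "(x,h) \<in> L"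
            proof (rule ccontr)
              assume "(x,h) \<notin> L"
              hence "h = m0" using cW'[OF h xW'] m0 \<tau>i(1) SWW unfolding inj_on_def by auto
              thus False using q1 FW prec_not_head[of m0 "eM @ rW" y] by auto
            qed
            have gL: "(g,y) \<in> L"
            proof (rule ccontr)
              assume "(g,y) \<notin> L"
              hence "g = w0" using cM'[OF g yM'] w0 \<sigma>i(1) SWW unfolding inj_on_def by auto
              thus False using q2 FM prec_not_head[of w0 "eW @ rM" x] by auto
            qed
            have "y \<noteq> m0" using m0 yM' dj6 by auto
            hence "precedes (eM @ rW) y h" using prec_tl[of m0 "eM @ rW" y h] q1 FW by auto
            moreover have "h \<in> set eM" using hL L(1) AW' eM by auto
            ultimately have "precedes eM y h" using prec_app1[of eM rW y h] FW by auto
            hence c1: "pos eM y < pos eM h" by (rule prec_pos[OF eM(1)])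
            have "x \<noteq> w0" using w0 xW' dj by auto
            hence "precedes (eW @ rM) x g" using prec_tl[of w0 "eW @ rM" x g] q2 FM by auto
            moreover have "g \<in> set eW" using gL L(1) AW' eW by auto
            ultimately have "precedes eW x g" using prec_app1[of eW rM x g] FM by auto
            hence c2: "pos eW x < pos eW g" by (rule prec_pos[OF eW(1)])
            show False using L(6) hL gL c1 c2 by blast
          qed
        qed
      qed
      show "\<exists>\<mu>'. marriage (W \<union> W') (M \<union> M') \<mu>' \<and>
               stable (W \<union> W') (M \<union> M') (fW pW) (fM pM) \<mu>' \<and> submarriage W M \<mu> \<mu>'"
      proof (intro exI[of _ \<mu>'] conjI)
        show "marriage (W \<union> W') (M \<union> M') \<mu>'" unfolding marriage_def using sub' g1 g2 by blast
        have "y \<in> set (fW pW x) \<and> x \<in> set (fM pM y)" if "(x,y) \<in> \<mu>'" for x y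
          using setW setM sub' that by blast
        thus "stable (W \<union> W') (M \<union> M') (fW pW) (fM pM) \<mu>'"
          unfolding stable_def using noblock by blast
        show "submarriage W M \<mu> \<mu>'"
        proof -
          have "(w,m) \<in> \<mu>' \<longleftrightarrow> (w,m) \<in> \<mu>" if "w \<in> W" "m \<in> M" for w m
          proof
            assume "(w,m) \<in> \<mu>'"
            thus "(w,m) \<in> \<mu>" using cW[of w m] that \<sigma>i dj6 by auto
          qed (auto simp: \<mu>'_def)
          thus ?thesis unfolding submarriage_def by blast
        qed
      qed
    next
      assume "\<exists>\<mu>'. marriage (W \<union> W') (M \<union> M') \<mu>' \<and>
               stable (W \<union> W') (M \<union> M') (fW pW) (fM pM) \<mu>' \<and> submarriage W M \<mu> \<mu>'"
      then obtain \<mu>' where mar': "marriage (W \<union> W') (M \<union> M') \<mu>'"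
        and st': "stable (W \<union> W') (M \<union> M') (fW pW) (fM pM) \<mu>'" and sm: "submarriage W M \<mu> \<mu>'" by blast
      from mar' have sub': "\<mu>' \<subseteq> (W \<union> W') \<times> (M \<union> M')"
        and g1: "\<forall>w m m'. (w,m)\<in>\<mu>' \<longrightarrow> (w,m')\<in>\<mu>' \<longrightarrow> m = m'"
        and g2: "\<forall>w w' m. (w,m)\<in>\<mu>' \<longrightarrow> (w',m)\<in>\<mu>' \<longrightarrow> w = w'"
        unfolding marriage_def by auto
      have nobl': "\<not> (prefers (fW pW) x y (husband \<mu>' x) \<and> prefers (fM pM) y x (wife \<mu>' y))"
        if "x \<in> W \<union> W'" "y \<in> M \<union> M'" for x y using st' that unfolding stable_def by auto
      have inc: "(w,m) \<in> \<mu>'" if "(w,m) \<in> \<mu>" for w m using that sub sm unfolding submarriage_def by auto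
      have inc2: "(w,m) \<in> \<mu>" if "(w,m) \<in> \<mu>'" "w \<in> W" "m \<in> M" for w m
        using that sm unfolding submarriage_def by auto
      have setW: "set (fW pW x) = M \<union> M'" if "x \<in> W \<union> W'" for x
        using fW_W[OF pW, of x] fW_W'[of x pW] that by blast
      have setM: "set (fM pM y) = W \<union> W'" if "y \<in> M \<union> M'" for y
        using fM_M[OF pM, of y] fM_M'[of y pM] that by blast
      have accW: "m \<in> set (pW w)" if wm: "(w,m) \<in> \<mu>" for w m
      proof (rule ccontr)
        assume nm: "m \<notin> set (pW w)"
        have wW: "w \<in> W" and mM: "m \<in> M" using wm sub by auto
        have s: "\<sigma> w \<in> M'" using \<sigma>i wW by auto
        note FW = fW_W[OF pW wW]
        have hw: "husband \<mu>' w = Some m" using husband_Some[OF g1 inc[OF wm]] .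
        have "m \<notin> set (pW w @ [\<sigma> w])" using nm s mM dj6 by auto
        moreover have "m \<in> set ((pW w @ [\<sigma> w]) @ enum (M \<union> M' - set (pW w @ [\<sigma> w])))"
          using FW mM by auto
        ultimately have "precedes (fW pW w) (\<sigma> w) m" using ded_pref FW by metis
        hence pr1: "prefers (fW pW) w (\<sigma> w) (husband \<mu>' w)"
          using hw prefers_Some_full[of m "fW pW" w "\<sigma> w"] setW[of w] wW mM by auto
        obtain rM where FM: "fM pM (\<sigma> w) = w # (eW @ rM)" "distinct (fM pM (\<sigma> w))"
          using fM_M'[OF s, of pM] \<sigma>inv[OF wW] by auto
        have pr2: "prefers (fM pM) (\<sigma> w) w (wife \<mu>' (\<sigma> w))"
        proof (cases "\<exists>g. (g, \<sigma> w) \<in> \<mu>'")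
          case True
          then obtain g where g: "(g, \<sigma> w) \<in> \<mu>'" by blast
          have "g \<noteq> w" using g g1 inc[OF wm] s mM dj6 by metis
          moreover have "g \<in> W \<union> W'" using g sub' by auto
          ultimately have "precedes (fM pM (\<sigma> w)) w g"
            using prec_head[of g "eW @ rM" w] FM setM[of "\<sigma> w"] s by auto
          thus ?thesis using wife_Some[OF g2 g] prefers_Some_full[of g "fM pM" "\<sigma> w" w]
              setM[of "\<sigma> w"] s \<open>g \<in> W \<union> W'\<close> by auto
        next
          case False
          thus ?thesis using wife_None[OF False] setM[of "\<sigma> w"] s wW unfolding prefers_def by auto
        qed
        show False using nobl'[of w "\<sigma> w"] wW s pr1 pr2 by blast
      qed
      have accM: "w \<in> set (pM m)" if wm: "(w,m) \<in> \<mu>" for w m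
      proof (rule ccontr)
        assume nw: "w \<notin> set (pM m)"
        have wW: "w \<in> W" and mM: "m \<in> M" using wm sub by auto
        have s: "\<tau> m \<in> W'" using \<tau>i mM by auto
        note FM = fM_M[OF pM mM]
        have hw: "wife \<mu>' m = Some w" using wife_Some[OF g2 inc[OF wm]] .
        have "w \<notin> set (pM m @ [\<tau> m])" using nw s wW dj by auto
        moreover have "w \<in> set ((pM m @ [\<tau> m]) @ enum (W \<union> W' - set (pM m @ [\<tau> m])))"
          using FM wW by auto
        ultimately have "precedes (fM pM m) (\<tau> m) w" using ded_pref FM by metis
        hence pr2: "prefers (fM pM) m (\<tau> m) (wife \<mu>' m)"
          using hw prefers_Some_full[of w "fM pM" m "\<tau> m"] setM[of m] wW mM by auto
        obtain rW where FW: "fW pW (\<tau> m) = m # (eM @ rW)" "distinct (fW pW (\<tau> m))"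
          using fW_W'[OF s, of pW] \<tau>inv[OF mM] by auto
        have pr1: "prefers (fW pW) (\<tau> m) m (husband \<mu>' (\<tau> m))"
        proof (cases "\<exists>h. (\<tau> m, h) \<in> \<mu>'")
          case True
          then obtain h where h: "(\<tau> m, h) \<in> \<mu>'" by blast
          have "h \<noteq> m" using h g2 inc[OF wm] s wW dj by metis
          moreover have "h \<in> M \<union> M'" using h sub' by auto
          ultimately have "precedes (fW pW (\<tau> m)) m h"
            using prec_head[of h "eM @ rW" m] FW setW[of "\<tau> m"] s by auto
          thus ?thesis using husband_Some[OF g1 h] prefers_Some_full[of h "fW pW" "\<tau> m" m]
              setW[of "\<tau> m"] s \<open>h \<in> M \<union> M'\<close> by auto
        next
          case False
          thus ?thesis using husband_None[OF False] setW[of "\<tau> m"] s mM unfolding prefers_def by auto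
        qed
        show False using nobl'[of "\<tau> m" m] mM s pr1 pr2 by blast
      qed
      have up1: "prefers (fW pW) w m (husband \<mu>' w)"
        if wW: "w \<in> W" and mM: "m \<in> M" and p: "prefers pW w m (husband \<mu> w)" for w m
      proof (cases "\<exists>h. (w,h) \<in> \<mu>'")
        case True
        then obtain h where h: "(w,h) \<in> \<mu>'" by blast
        have hM: "h \<in> M \<union> M'" using h sub' by auto
        have pWs: "set (pW w) \<subseteq> M" using fW_W[OF pW wW] by blast
        have k: "m \<in> set (pW w) \<and> (precedes (pW w) m h \<or> h \<notin> set (pW w))"
        proof (cases "h \<in> M")
          case True
          hence "husband \<mu> w = Some h" using husband_Some[OF f1 inc2[OF h wW True]] by simp
          thus ?thesis using p unfolding prefers_def by auto
        next
          case False
          have "\<not> (\<exists>m'. (w,m') \<in> \<mu>)" using False g1 inc h sub by blast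
          hence "husband \<mu> w = None" by (rule husband_None)
          thus ?thesis using p False pWs unfolding prefers_def by auto
        qed
        note FW = fW_W[OF pW wW]
        have "precedes (fW pW w) m h"
          using lower_big[of m "pW w" h "\<sigma> w"] k FW hM by metis
        moreover have hs: "h \<in> set (fW pW w)" using setW[of w] wW hM by auto
        ultimately show ?thesis using husband_Some[OF g1 h] prefers_Some_full[of h "fW pW" w m, OF hs] by simp
      next
        case False
        thus ?thesis using husband_None[OF False] setW[of w] wW mM unfolding prefers_def by auto
      qed
      have up2: "prefers (fM pM) m w (wife \<mu>' m)"
        if wW: "w \<in> W" and mM: "m \<in> M" and p: "prefers pM m w (wife \<mu> m)" for w m
      proof (cases "\<exists>g. (g,m) \<in> \<mu>'")
        case True
        then obtain g where g: "(g,m) \<in> \<mu>'" by blast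
        have gW: "g \<in> W \<union> W'" using g sub' by auto
        have pMs: "set (pM m) \<subseteq> W" using fM_M[OF pM mM] by blast
        have k: "w \<in> set (pM m) \<and> (precedes (pM m) w g \<or> g \<notin> set (pM m))"
        proof (cases "g \<in> W")
          case True
          hence "wife \<mu> m = Some g" using wife_Some[OF f2 inc2[OF g True mM]] by simp
          thus ?thesis using p unfolding prefers_def by auto
        next
          case False
          have "\<not> (\<exists>w'. (w',m) \<in> \<mu>)" using False g2 inc g sub by blast
          hence "wife \<mu> m = None" by (rule wife_None)
          thus ?thesis using p False pMs unfolding prefers_def by auto
        qed
        note FM = fM_M[OF pM mM]
        have "precedes (fM pM m) w g"
          using lower_big[of w "pM m" g "\<tau> m"] k FM gW by metis
        moreover have gs: "g \<in> set (fM pM m)" using setM[of m] mM gW by auto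
        ultimately show ?thesis using wife_Some[OF g2 g] prefers_Some_full[of g "fM pM" m w, OF gs] by simp
      next
        case False
        thus ?thesis using wife_None[OF False] setM[of m] wW mM unfolding prefers_def by auto
      qed
      show "stable W M pW pM \<mu>"
        unfolding stable_def using accW accM up1 up2 nobl' by blast
    qed
  qed
  show ?thesis
    by (rule exI[of _ fW], rule exI[of _ fM]) (use full1 full2 main in blast)
qed

end
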